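(* Let $k\ge 2$, $p\in(0,1)$, $q=1-p$, and let $L^{(k)}(z)=\sum_{n\ge 2}L^{(k)}_n(p)z^n$. Then, as formal power series in $z$, $$L^{(k)}(z)=\frac{z\,(kp-(k-1))\,S^{(k)}(p^{k-1}qz)-qz^2\big((2k-1)p-(2k-2)+(k-1)qz\big)}{q^2(1-z)^2}.$$
   Context: For $i\ge 1$, $s^{(k)}_i=\frac{k-1}{ki-1}\binom{ki-1}{i-1}$ and $S^{(k)}(z)=\sum_{i\ge1}s^{(k)}_i z^i$. For $n\ge 2$, $L^{(k)}_n(p)=(p^{k-1}q)^n\frac1q\sum_{j=k}^{(k-1)n} j\,d^{(k)}_{n,j}(1/p)^j$, where for $k\le j\le (k-1)n$, $d^{(k)}_{n,j}=\binom{kn-2-j}{n-2}-\sum_{\ell=1}^{\,n-\lceil j/(k-1)\rceil} s^{(k)}_\ell\binom{k(n-\ell)-1-j}{n-\ell-1}$. *)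

theory Defs
  imports "HOL-Computational_Algebra.Formal_Power_Series" Complex_Main
begin

definition s_coef :: "nat \<Rightarrow> nat \<Rightarrow> real" where
  "s_coef k i = (real k - 1) / (real k * real i - 1) * real ((k * i - 1) choose (i - 1))"

definition S_fps :: "nat \<Rightarrow> real fps" where
  "S_fps k = Abs_fps (\<lambda>i. if i = 0 then 0 else s_coef k i)"

definition d_coef :: "nat \<Rightarrow> nat \<Rightarrow> nat \<Rightarrow> real" where
  "d_coef k n j = real ((k * n - 2 - j) choose (n - 2))
     - (\<Sum>l = 1..n - nat \<lceil>real j / real (k - 1)\<rceil>.
          s_coef k l * real ((k * (n - l) - 1 - j) choose (n - l - 1)))"

definition L_coef :: "nat \<Rightarrow> nat \<Rightarrow> real \<Rightarrow> real" where
  "L_coef k n p = (let q = 1 - p in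
     (p ^ (k - 1) * q) ^ n * (1 / q) *
       (\<Sum>j = k..(k - 1) * n. real j * d_coef k n j * (1 / p) ^ j))"

definition L_fps :: "nat \<Rightarrow> real \<Rightarrow> real fps" where
  "L_fps k p = Abs_fps (\<lambda>n. if n \<ge> 2 then L_coef k n p else 0)"

end

theory Submission
  imports Defs "HOL-Computational_Algebra.Polynomial"
begin

unbundle fps_syntax


definition Aq :: "nat \<Rightarrow> real \<Rightarrow> nat \<Rightarrow> real" where
 "Aq k x i = ((x + real k * real i) gchoose i)
    - (if i = 0 then 0 else real k * ((x + real k * real i - 1) gchoose (i - 1)))"

definition Bq :: "nat \<Rightarrow> real \<Rightarrow> nat \<Rightarrow> real" where
 "Bq k y r = (y + real k * real r) gchoose r"

definition LHq :: "nat \<Rightarrow> nat \<Rightarrow> real \<Rightarrow> real \<Rightarrow> real" where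
 "LHq k n x y = (\<Sum>i\<le>n. Aq k x i * Bq k y (n - i))"

lemma pasc: "((a::real) gchoose Suc m) - ((a - 1) gchoose Suc m) = (a - 1) gchoose m"
  using gbinomial_Suc_Suc[of "a - 1" m] by simp

lemma Aq_0 [simp]: "Aq k x 0 = 1"
  by (simp add: Aq_def)

lemma Aq_diff: "Aq k x (Suc m) - Aq k (x - 1) (Suc m) = Aq k (x + real k - 1) m"
proof (cases m)
  case 0
  then show ?thesis by (simp add: Aq_def)
next
  case (Suc m')
  have e1: "x + real k * real (Suc m) - 1 = x + real k - 1 + real k * real m"
    by (simp add: algebra_simps)
  have p1: "((x + real k * real (Suc m)) gchoose Suc m) - ((x - 1 + real k * real (Suc m)) gchoose Suc m)
      = (x + real k * real (Suc m) - 1) gchoose m"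
    using pasc[of "x + real k * real (Suc m)" m] by (simp add: algebra_simps)
  have p2: "((x + real k * real (Suc m) - 1) gchoose Suc m') - ((x - 1 + real k * real (Suc m) - 1) gchoose Suc m')
      = (x + real k * real (Suc m) - 2) gchoose m'"
    using pasc[of "x + real k * real (Suc m) - 1" m'] by (simp add: algebra_simps)
  have e2: "x + real k - 1 + real k * real m - 1 = x + real k * real (Suc m) - 2"
    by (simp add: algebra_simps)
  show ?thesis
    unfolding Aq_def using p1 p2 Suc e1 e2
    by (simp add: algebra_simps)
qed

lemma Aq_zero: "i > 0 \<Longrightarrow> Aq k 0 i = 0"
  by (simp add: Aq_def gbinomial_absorption'[of i "real k * real i"])

lemma LHq_diff: "LHq k (Suc n) x y - LHq k (Suc n) (x - 1) y = LHq k n (x + real k - 1) y"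
proof -
  have "LHq k (Suc n) x y - LHq k (Suc n) (x - 1) y
     = (\<Sum>i\<le>n. (Aq k x (Suc i) - Aq k (x - 1) (Suc i)) * Bq k y (n - i))"
    unfolding LHq_def sum.atMost_Suc_shift by (simp add: algebra_simps sum_subtractf)
  also have "\<dots> = LHq k n (x + real k - 1) y"
    unfolding LHq_def Aq_diff ..
  finally show ?thesis .
qed

lemma RH_diff: "((x + y + real k * real (Suc n)) gchoose Suc n) - ((x - 1 + y + real k * real (Suc n)) gchoose Suc n)
   = ((x + real k - 1) + y + real k * real n) gchoose n"
  using pasc[of "x + y + real k * real (Suc n)" n] by (simp add: algebra_simps)

lemma LHq_nat: "LHq k n (real m) y = (real m + y + real k * real n) gchoose n"
proof (induction n arbitrary: m y)
  case 0
  then show ?case by (simp add: LHq_def Bq_def)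
next
  case (Suc n)
  note IH = Suc.IH
  show ?case
  proof (induction m)
    case 0
    show ?case
      unfolding LHq_def sum.atMost_Suc_shift by (simp add: Aq_zero Bq_def)
  next
    case (Suc m)
    have "LHq k (Suc n) (real (Suc m)) y = LHq k (Suc n) (real m) y + LHq k n (real (m + k)) y"
      using LHq_diff[of k n "real (Suc m)" y] by (simp add: algebra_simps)
    also have "\<dots> = ((real m + y + real k * real (Suc n)) gchoose (Suc n))
        + ((real (m + k) + y + real k * real n) gchoose n)"
      using Suc.IH IH[of "m + k" y] by simp
    also have "\<dots> = (real (Suc m) + y + real k * real (Suc n)) gchoose (Suc n)"
      using RH_diff[of "real (Suc m)" y k n] by (simp add: algebra_simps)
    finally show ?case .
  qed
qed

lemma LHq_m1: assumes "k \<ge> 1" shows "LHq k n (-1) y = (-1 + y + real k * real n) gchoose n"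
proof (cases n)
  case 0
  then show ?thesis by (simp add: LHq_def Bq_def)
next
  case (Suc n')
  have "LHq k n (-1) y = LHq k n 0 y - LHq k n' (real k - 1) y"
    using LHq_diff[of k n' 0 y] Suc by simp
  also have "\<dots> = ((y + real k * real n) gchoose n) - ((real (k - 1) + y + real k * real n') gchoose n')"
    using LHq_nat[of k n 0 y] LHq_nat[of k n' "k - 1" y] \<open>k \<ge> 1\<close> by (simp add: of_nat_diff)
  also have "\<dots> = (-1 + y + real k * real n) gchoose n"
    using pasc[of "y + real k * real n" n'] Suc \<open>k \<ge> 1\<close> by (simp add: of_nat_diff algebra_simps)
  finally show ?thesis .
qed


lemma s_Aq: assumes "k \<ge> 2" shows "s_coef k (Suc m) = - Aq k (-1) (Suc m)"
proof -
  define a where "a = real k * real (Suc m) - 1"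
  have a1: "a \<ge> 1"
  proof -
    have "real k \<ge> 2" using assms by simp
    moreover have "real k * real m \<ge> 0" by simp
    ultimately show ?thesis unfolding a_def by (simp only: of_nat_Suc distrib_left mult_1_right)
  qed
  have "k * Suc m \<ge> 1" using assms by simp
  then have km: "real (k * Suc m - 1) = a" unfolding a_def by (simp add: of_nat_diff algebra_simps)
  have c1: "real ((k * Suc m - 1) choose m) = a gchoose m"
    using km by (simp add: binomial_gbinomial)
  have ac: "(a - real m) * (a gchoose m) = a * ((a - 1) gchoose m)"
    by (rule gbinomial_absorb_comp)
  have am: "a - real m = (real k - 1) * real (Suc m)" unfolding a_def by (simp add: algebra_simps)
  have k1: "real k - 1 > 0" using assms by simp
  have s1: "s_coef k (Suc m) = ((a - 1) gchoose m) / real (Suc m)"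
  proof -
    have "s_coef k (Suc m) = (real k - 1) / a * (a gchoose m)"
      unfolding s_coef_def using c1 a_def by simp
    also have "a gchoose m = a * ((a - 1) gchoose m) / ((real k - 1) * real (Suc m))"
    proof -
      have e: "(a gchoose m) * ((real k - 1) * real (Suc m)) = a * ((a - 1) gchoose m)"
        using ac am by (simp only: mult.commute)
      have nz: "(real k - 1) * real (Suc m) \<noteq> 0" using k1 by simp
      show ?thesis using e nz by (subst eq_divide_eq) simp
    qed
    also have "(real k - 1) / a * (a * ((a - 1) gchoose m) / ((real k - 1) * real (Suc m)))
        = ((a - 1) gchoose m) / real (Suc m)"
    proof -
      have "a \<noteq> 0" "real k - 1 \<noteq> 0" using a1 k1 by auto
      then show ?thesis by (simp add: divide_simps)
    qed
    finally show ?thesis .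
  qed
  have "Aq k (-1) (Suc m) = (a gchoose Suc m) - real k * ((a - 1) gchoose m)"
    unfolding Aq_def a_def by (simp add: algebra_simps)
  also have "a gchoose Suc m = a / real (Suc m) * ((a - 1) gchoose m)"
    using gbinomial_absorption'[of "Suc m" a] by simp
  finally have "Aq k (-1) (Suc m) = (a / real (Suc m) - real k) * ((a - 1) gchoose m)"
    by (simp add: algebra_simps)
  also have "a / real (Suc m) - real k = - 1 / real (Suc m)"
    unfolding a_def by (simp add: field_simps)
  finally show ?thesis using s1 by simp
qed

lemma H: assumes "k \<ge> 2"
  shows "(\<Sum>i\<le>n. s_coef k (Suc i) * Bq k y (n - i)) = (y + real k * real (Suc n) - 1) gchoose n"
proof -
  have "LHq k (Suc n) (-1) y = Bq k y (Suc n) - (\<Sum>i\<le>n. s_coef k (Suc i) * Bq k y (n - i))"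
    unfolding LHq_def sum.atMost_Suc_shift using s_Aq[OF assms]
    by (simp add: sum_negf)
  then have "(\<Sum>i\<le>n. s_coef k (Suc i) * Bq k y (n - i))
      = ((y + real k * real (Suc n)) gchoose Suc n) - ((-1 + y + real k * real (Suc n)) gchoose Suc n)"
    using LHq_m1[of k "Suc n" y] assms by (simp add: Bq_def)
  also have "\<dots> = (y + real k * real (Suc n) - 1) gchoose n"
    using pasc[of "y + real k * real (Suc n)" n] by (simp add: algebra_simps)
  finally show ?thesis .
qed




lemma H0: assumes "k \<ge> 2"
  shows "(\<Sum>i\<le>n. s_coef k (Suc i) * real ((y + k * (n - i)) choose (n - i)))
       = real ((y + k * Suc n - 1) choose n)"
proof -
  have "(\<Sum>i\<le>n. s_coef k (Suc i) * real ((y + k * (n - i)) choose (n - i)))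
      = (\<Sum>i\<le>n. s_coef k (Suc i) * Bq k (real y) (n - i))"
    by (intro sum.cong) (simp_all add: Bq_def binomial_gbinomial)
  also have "\<dots> = (real y + real k * real (Suc n) - 1) gchoose n" by (rule H[OF assms])
  also have "real y + real k * real (Suc n) - 1 = real (y + k * Suc n - 1)"
    using assms by (simp add: of_nat_diff algebra_simps)
  finally show ?thesis by (simp add: binomial_gbinomial)
qed

lemma Hm1: assumes "k \<ge> 2"
  shows "(\<Sum>i<n. s_coef k (Suc i) * real ((k * (n - i) - 1) choose (n - i))) + s_coef k (Suc n)
       = real ((k * Suc n - 2) choose n)"
proof -
  have "(\<Sum>i<n. s_coef k (Suc i) * real ((k * (n - i) - 1) choose (n - i))) + s_coef k (Suc n)
      = (\<Sum>i\<le>n. s_coef k (Suc i) * Bq k (-1) (n - i))"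
  proof -
    have "(\<Sum>i<n. s_coef k (Suc i) * real ((k * (n - i) - 1) choose (n - i)))
        = (\<Sum>i<n. s_coef k (Suc i) * Bq k (-1) (n - i))"
    proof (intro sum.cong refl)
      fix i assume "i \<in> {..<n}"
      then have "k * (n - i) \<ge> 1" using assms by simp
      then have "real (k * (n - i) - 1) = -1 + real k * real (n - i)"
        by (simp add: of_nat_diff)
      then show "s_coef k (Suc i) * real ((k * (n - i) - 1) choose (n - i)) = s_coef k (Suc i) * Bq k (-1) (n - i)"
        by (simp add: Bq_def binomial_gbinomial)
    qed
    then show ?thesis by (simp add: lessThan_Suc_atMost[symmetric] Bq_def)
  qed
  also have "\<dots> = (-1 + real k * real (Suc n) - 1) gchoose n" by (rule H[OF assms])
  also have "-1 + real k * real (Suc n) - 1 = real (k * Suc n - 2)"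
  proof -
    have "k * Suc n \<ge> 2" using assms by simp
    then show ?thesis by (simp add: of_nat_diff algebra_simps)
  qed
  finally show ?thesis by (simp add: binomial_gbinomial)
qed




lemma cj: assumes "k \<ge> 2"
  shows "r < nat \<lceil>real j / real (k - 1)\<rceil> \<longleftrightarrow> (k - 1) * r < j"
proof -
  have kp: "real (k - 1) > 0" using assms by simp
  have "r < nat \<lceil>real j / real (k - 1)\<rceil> \<longleftrightarrow> int r < \<lceil>real j / real (k - 1)\<rceil>"
    by linarith
  also have "\<dots> \<longleftrightarrow> real r < real j / real (k - 1)"
    by (simp add: less_ceiling_iff)
  also have "\<dots> \<longleftrightarrow> real r * real (k - 1) < real j"
    using kp by (simp add: pos_less_divide_eq)
  also have "\<dots> \<longleftrightarrow> (k - 1) * r < j"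
    by (metis of_nat_less_iff of_nat_mult mult.commute)
  finally show ?thesis .
qed

lemma cj_eq: assumes "k \<ge> 2" and "\<And>r. (k - 1) * r < j \<longleftrightarrow> r < v"
  shows "nat \<lceil>real j / real (k - 1)\<rceil> = v"
proof -
  have "\<And>r. r < nat \<lceil>real j / real (k - 1)\<rceil> \<longleftrightarrow> r < v" using cj[OF assms(1)] assms(2) by blast
  then show ?thesis by (metis linorder_neqE_nat less_irrefl)
qed

lemma term0: assumes "k \<ge> 2" "r \<ge> 2" "(k - 1) * r < j"
  shows "(k * r - 1 - j) choose (r - 1) = 0"
proof -
  have "k * r = (k - 1) * r + r" using assms(1) by (cases k) auto
  then have "k * r - 1 - j < r - 1" using assms by linarith
  then show ?thesis by (rule binomial_eq_0)
qed

lemma d_alt: assumes k2: "k \<ge> 2" and "n \<ge> 2" and "k \<le> j" and "j \<le> (k - 1) * n"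
  shows "d_coef k n j = real ((k * n - 2 - j) choose (n - 2))
     - (\<Sum>l = 1..n - 2. s_coef k l * real ((k * (n - l) - 1 - j) choose (n - l - 1)))"
proof -
  define c where "c = nat \<lceil>real j / real (k - 1)\<rceil>"
  have c2: "c \<ge> 2"
  proof -
    have "(k - 1) * 1 < j" using assms by simp
    then have "1 < c" unfolding c_def using cj[OF k2] by blast
    then show ?thesis by simp
  qed
  have cn: "c \<le> n"
  proof -
    have "\<not> (k - 1) * n < j" using assms by simp
    then have "\<not> n < c" unfolding c_def using cj[OF k2] by blast
    then show ?thesis by simp
  qed
  have "(\<Sum>l = 1..n - c. s_coef k l * real ((k * (n - l) - 1 - j) choose (n - l - 1)))
      = (\<Sum>l = 1..n - 2. s_coef k l * real ((k * (n - l) - 1 - j) choose (n - l - 1)))"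
  proof (rule sum.mono_neutral_left)
    show "finite {1..n - 2}" by simp
    show "{1..n - c} \<subseteq> {1..n - 2}" using c2 by auto
    show "\<forall>l\<in>{1..n - 2} - {1..n - c}. s_coef k l * real ((k * (n - l) - 1 - j) choose (n - l - 1)) = 0"
    proof
      fix l assume l: "l \<in> {1..n - 2} - {1..n - c}"
      then have "n - l < c" "n - l \<ge> 2" by auto
      then have "(k - 1) * (n - l) < j" unfolding c_def using cj[OF k2] by blast
      then have "(k * (n - l) - 1 - j) choose (n - l - 1) = 0"
        using term0[OF k2 \<open>n - l \<ge> 2\<close>] by simp
      then show "s_coef k l * real ((k * (n - l) - 1 - j) choose (n - l - 1)) = 0" by simp
    qed
  qed
  then show ?thesis unfolding d_coef_def c_def by simp
qed

lemma d_top: assumes k2: "k \<ge> 2" and "n \<ge> 2"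
  shows "d_coef k n ((k - 1) * n) = 1"
proof -
  have "nat \<lceil>real ((k - 1) * n) / real (k - 1)\<rceil> = n"
    using k2 by (intro cj_eq) auto
  moreover have "k * n - 2 - (k - 1) * n = n - 2"
  proof -
    have "k * n = (k - 1) * n + n" using k2 by (cases k) auto
    then show ?thesis by simp
  qed
  ultimately show ?thesis unfolding d_coef_def by simp
qed

lemma sum_1_Suc: "(\<Sum>l = 1..Suc m. f l) = (\<Sum>i\<le>m. f (Suc i))"
  by (induction m) auto

lemma d_low: assumes k2: "k \<ge> 2" and n2: "n \<ge> 2" and "1 \<le> j" and "j \<le> k - 1"
  shows "d_coef k n j = 0"
proof -
  have c1: "nat \<lceil>real j / real (k - 1)\<rceil> = 1"
  proof (rule cj_eq[OF k2])
    fix r show "(k - 1) * r < j \<longleftrightarrow> r < 1"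
    proof
      assume "(k - 1) * r < j"
      then show "r < 1" using assms by (cases r) auto
    qed (use assms in auto)
  qed
  obtain m where m: "n = Suc (Suc m)" using n2 by (metis add_2_eq_Suc le_Suc_ex)
  have "(\<Sum>l = 1..n - 1. s_coef k l * real ((k * (n - l) - 1 - j) choose (n - l - 1)))
      = (\<Sum>i\<le>m. s_coef k (Suc i) * real ((k * (n - Suc i) - 1 - j) choose (n - Suc i - 1)))"
  proof -
    have nm: "n - 1 = Suc m" using m by simp
    show ?thesis by (simp only: nm sum_1_Suc)
  qed
  also have "\<dots> = (\<Sum>i\<le>m. s_coef k (Suc i) * real (((k - 1 - j) + k * (m - i)) choose (m - i)))"
  proof (intro sum.cong refl)
    fix i assume "i \<in> {..m}"
    then have "n - Suc i = Suc (m - i)" using m by auto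
    moreover have "k * Suc (m - i) - 1 - j = (k - 1 - j) + k * (m - i)" using assms by simp
    ultimately show "s_coef k (Suc i) * real ((k * (n - Suc i) - 1 - j) choose (n - Suc i - 1))
        = s_coef k (Suc i) * real (((k - 1 - j) + k * (m - i)) choose (m - i))" by simp
  qed
  also have "\<dots> = real ((k - 1 - j + k * Suc m - 1) choose m)" by (rule H0[OF k2])
  also have "k - 1 - j + k * Suc m - 1 = k * n - 2 - j" using assms m by simp
  finally show ?thesis unfolding d_coef_def c1 using m by simp
qed


lemma sum_1_lt: "(\<Sum>l = 1..m. f l) = (\<Sum>i<m. f (Suc i))"
  by (induction m) (auto simp: lessThan_Suc add.commute)

lemma d_k: assumes k2: "k \<ge> 2" and n2: "n \<ge> 2"
  shows "d_coef k n k = s_coef k (n - 1)"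
proof -
  obtain m where m: "n = Suc (Suc m)" using n2 by (metis add_2_eq_Suc le_Suc_ex)
  have kn: "k \<le> (k - 1) * n" using k2 m by (cases k) auto
  have "d_coef k n k = real ((k * n - 2 - k) choose (n - 2))
     - (\<Sum>l = 1..n - 2. s_coef k l * real ((k * (n - l) - 1 - k) choose (n - l - 1)))"
    by (rule d_alt[OF k2 n2 order.refl kn])
  also have "(\<Sum>l = 1..n - 2. s_coef k l * real ((k * (n - l) - 1 - k) choose (n - l - 1)))
     = (\<Sum>i<m. s_coef k (Suc i) * real ((k * (m - i) - 1) choose (m - i)))"
    unfolding sum_1_lt
  proof (intro sum.cong)
    show "{..<n - 2} = {..<m}" using m by simp
    fix i assume "i \<in> {..<m}"
    then have "n - Suc i = Suc (Suc (m - i - 1))" "m - i = Suc (m - i - 1)" using m by auto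
    then show "s_coef k (Suc i) * real ((k * (n - Suc i) - 1 - k) choose (n - Suc i - 1))
       = s_coef k (Suc i) * real ((k * (m - i) - 1) choose (m - i))"
      by (simp add: algebra_simps)
  qed
  also have "\<dots> = real ((k * Suc m - 2) choose m) - s_coef k (Suc m)"
    using Hm1[OF k2, of m] by simp
  also have "k * n - 2 - k = k * Suc m - 2" using m by simp
  finally show ?thesis using m by simp
qed

lemma pasc_nat: assumes "1 \<le> r" "1 \<le> M \<or> 2 \<le> r"
  shows "real (M choose r) - real ((M - 1) choose r) = real ((M - 1) choose (r - 1))"
proof (cases M)
  case 0
  then show ?thesis using assms by simp
next
  case (Suc M')
  obtain r' where r: "r = Suc r'" using assms(1) by (cases r) auto
  show ?thesis unfolding Suc r using binomial_Suc_Suc[of M' r'] by simp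
qed


lemma d_mid: assumes k2: "k \<ge> 2" and n3: "n \<ge> 3" and ik: "k \<le> i" and i2: "i \<le> 2 * k - 2"
  shows "d_coef k n i = d_coef k n (Suc i)"
proof -
  obtain m where m: "n = Suc (Suc (Suc m))" using n3 by (metis Suc_diff_Suc diff_Suc_Suc diff_zero le_eq_less_or_eq less_eq_Suc_le numeral_3_eq_3 zero_less_Suc)
  have kn: "Suc i \<le> (k - 1) * n" using k2 m i2 by (cases k) auto
  have n2: "n \<ge> 2" using n3 by simp
  have da: "d_coef k n i = real ((k * n - 2 - i) choose (n - 2))
     - (\<Sum>l = 1..n - 2. s_coef k l * real ((k * (n - l) - 1 - i) choose (n - l - 1)))"
    using d_alt[OF k2 n2 ik] kn by simp
  have db: "d_coef k n (Suc i) = real ((k * n - 2 - Suc i) choose (n - 2))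
     - (\<Sum>l = 1..n - 2. s_coef k l * real ((k * (n - l) - 1 - Suc i) choose (n - l - 1)))"
    using d_alt[OF k2 n2 _ kn] ik by simp
  have first: "real ((k * n - 2 - i) choose (n - 2)) - real ((k * n - 2 - Suc i) choose (n - 2))
      = real ((k * n - 3 - i) choose m)"
  proof -
    have "k * n - 2 - Suc i = (k * n - 2 - i) - 1" by simp
    moreover have "k * n - 3 - i = (k * n - 2 - i) - 1" by simp
    moreover have "n - 2 - 1 = m" using m by simp
    moreover have "1 \<le> k * n - 2 - i" using kn k2 m by (cases k) auto
    ultimately show ?thesis using pasc_nat[of "n - 2" "k * n - 2 - i"] m by simp
  qed
  have second: "(\<Sum>l = 1..n - 2. s_coef k l * real ((k * (n - l) - 1 - i) choose (n - l - 1)))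
      - (\<Sum>l = 1..n - 2. s_coef k l * real ((k * (n - l) - 1 - Suc i) choose (n - l - 1)))
      = (\<Sum>j\<le>m. s_coef k (Suc j) * real (((2 * k - 2 - i) + k * (m - j)) choose (m - j)))"
  proof -
    have nm: "n - 2 = Suc m" using m by simp
    show ?thesis unfolding nm sum_1_Suc sum_subtractf[symmetric]
    proof (intro sum.cong refl)
      fix j assume "j \<in> {..m}"
      then obtain t where t: "m - j = t" "n - Suc j = Suc (Suc t)" using m by auto
      have M1: "1 \<le> k * Suc (Suc t) - 1 - i" using i2 k2 by (simp add: algebra_simps)
      have e1: "k * Suc (Suc t) - 1 - Suc i = (k * Suc (Suc t) - 1 - i) - 1" by simp
      have e2: "k * Suc (Suc t) - 1 - i - 1 = (2 * k - 2 - i) + k * t" using i2 k2 by (simp add: algebra_simps)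
      have "real ((k * Suc (Suc t) - 1 - i) choose Suc t) - real ((k * Suc (Suc t) - 1 - Suc i) choose Suc t)
         = real (((2 * k - 2 - i) + k * t) choose t)"
        using pasc_nat[of "Suc t" "k * Suc (Suc t) - 1 - i"] M1 e1 e2 by simp
      then show "s_coef k (Suc j) * real ((k * (n - Suc j) - 1 - i) choose (n - Suc j - 1))
          - s_coef k (Suc j) * real ((k * (n - Suc j) - 1 - Suc i) choose (n - Suc j - 1))
          = s_coef k (Suc j) * real (((2 * k - 2 - i) + k * (m - j)) choose (m - j))"
        unfolding t by (simp add: right_diff_distrib[symmetric])
    qed
  qed
  have h: "(\<Sum>j\<le>m. s_coef k (Suc j) * real (((2 * k - 2 - i) + k * (m - j)) choose (m - j)))
      = real (((2 * k - 2 - i) + k * Suc m - 1) choose m)" by (rule H0[OF k2])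
  have e: "(2 * k - 2 - i) + k * Suc m - 1 = k * n - 3 - i" using m i2 k2 by (simp add: algebra_simps)
  show ?thesis using da db first second h e by simp
qed


lemma d_step: assumes k2: "k \<ge> 2" and n3: "n \<ge> 3" and ik: "2 * k - 1 \<le> i" and kn: "Suc i \<le> (k - 1) * n"
  shows "d_coef k n i - d_coef k n (Suc i) = d_coef k (n - 1) (Suc i - k)"
proof -
  obtain m where m: "n = Suc (Suc (Suc m))" using n3 by (metis Suc_diff_Suc diff_Suc_Suc diff_zero le_eq_less_or_eq less_eq_Suc_le numeral_3_eq_3 zero_less_Suc)
  have n2: "n \<ge> 2" using n3 by simp
  have ik': "k \<le> i" using ik k2 by simp
  have da: "d_coef k n i = real ((k * n - 2 - i) choose (n - 2))
     - (\<Sum>l = 1..n - 2. s_coef k l * real ((k * (n - l) - 1 - i) choose (n - l - 1)))"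
    using d_alt[OF k2 n2 ik'] kn by simp
  have db: "d_coef k n (Suc i) = real ((k * n - 2 - Suc i) choose (n - 2))
     - (\<Sum>l = 1..n - 2. s_coef k l * real ((k * (n - l) - 1 - Suc i) choose (n - l - 1)))"
    using d_alt[OF k2 n2 _ kn] ik' by simp
  have kn1: "Suc i - k \<le> (k - 1) * (n - 1)"
  proof -
    have "(k - 1) * n = (k - 1) * (n - 1) + (k - 1)" using m by (simp add: algebra_simps)
    then show ?thesis using kn k2 by linarith
  qed
  have dc: "d_coef k (n - 1) (Suc i - k) = real ((k * (n - 1) - 2 - (Suc i - k)) choose (n - 1 - 2))
     - (\<Sum>l = 1..n - 1 - 2. s_coef k l * real ((k * (n - 1 - l) - 1 - (Suc i - k)) choose (n - 1 - l - 1)))"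
    using d_alt[OF k2 _ _ kn1] m ik by simp
  have first: "real ((k * n - 2 - i) choose (n - 2)) - real ((k * n - 2 - Suc i) choose (n - 2))
      = real ((k * (n - 1) - 2 - (Suc i - k)) choose (n - 1 - 2))"
  proof -
    have "k * n - 2 - Suc i = (k * n - 2 - i) - 1" by simp
    moreover have "k * (n - 1) - 2 - (Suc i - k) = (k * n - 2 - i) - 1"
    proof -
      have "k * n = k * (n - 1) + k" using m by (simp add: algebra_simps)
      then show ?thesis using ik k2 by linarith
    qed
    moreover have "n - 2 - 1 = n - 1 - 2" using m by simp
    moreover have "1 \<le> k * n - 2 - i"
    proof -
      have "k * n = (k - 1) * n + n" using k2 by (cases k) auto
      then show ?thesis using kn m by linarith
    qed
    ultimately show ?thesis using pasc_nat[of "n - 2" "k * n - 2 - i"] m by simp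
  qed
  have second: "(\<Sum>l = 1..n - 2. s_coef k l * real ((k * (n - l) - 1 - i) choose (n - l - 1)))
      - (\<Sum>l = 1..n - 2. s_coef k l * real ((k * (n - l) - 1 - Suc i) choose (n - l - 1)))
      = (\<Sum>l = 1..n - 1 - 2. s_coef k l * real ((k * (n - 1 - l) - 1 - (Suc i - k)) choose (n - 1 - l - 1)))"
  proof -
    have nm: "n - 2 = Suc m" "n - 1 - 2 = m" using m by simp_all
    have last: "s_coef k (Suc m) * real ((k * (n - Suc m) - 1 - i) choose (n - Suc m - 1))
          - s_coef k (Suc m) * real ((k * (n - Suc m) - 1 - Suc i) choose (n - Suc m - 1)) = 0"
    proof -
      have "n - Suc m = 2" using m by simp
      moreover have "k * 2 - 1 - i = 0" "k * 2 - 1 - Suc i = 0" using ik by auto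
      ultimately show ?thesis by simp
    qed
    have "(\<Sum>l = 1..n - 2. s_coef k l * real ((k * (n - l) - 1 - i) choose (n - l - 1)))
      - (\<Sum>l = 1..n - 2. s_coef k l * real ((k * (n - l) - 1 - Suc i) choose (n - l - 1)))
      = (\<Sum>j<m. s_coef k (Suc j) * real ((k * (n - Suc j) - 1 - i) choose (n - Suc j - 1))
          - s_coef k (Suc j) * real ((k * (n - Suc j) - 1 - Suc i) choose (n - Suc j - 1)))"
      unfolding nm(1) sum_1_Suc sum_subtractf[symmetric] using last
      by (simp add: lessThan_Suc_atMost[symmetric])
    also have "\<dots> = (\<Sum>j<m. s_coef k (Suc j) * real ((k * (n - 1 - Suc j) - 1 - (Suc i - k)) choose (n - 1 - Suc j - 1)))"
    proof (intro sum.cong refl)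
      fix j assume "j \<in> {..<m}"
      then obtain t where "m = Suc (j + t)" using less_imp_Suc_add by auto
      then have t: "n - Suc j = Suc (Suc (Suc t))" "n - 1 - Suc j = Suc (Suc t)" using m by simp_all
      have M1: "1 \<le> k * Suc (Suc (Suc t)) - 1 - i \<or> 2 \<le> Suc (Suc t)" by simp
      have e1: "k * Suc (Suc (Suc t)) - 1 - Suc i = (k * Suc (Suc (Suc t)) - 1 - i) - 1" by simp
      have e2: "k * Suc (Suc (Suc t)) - 1 - i - 1 = k * Suc (Suc t) - 1 - (Suc i - k)"
      proof -
        have "k * Suc (Suc (Suc t)) = k * Suc (Suc t) + k" by simp
        then show ?thesis using ik k2 by linarith
      qed
      have "real ((k * Suc (Suc (Suc t)) - 1 - i) choose Suc (Suc t)) - real ((k * Suc (Suc (Suc t)) - 1 - Suc i) choose Suc (Suc t))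
         = real ((k * Suc (Suc t) - 1 - (Suc i - k)) choose Suc t)"
        using pasc_nat[of "Suc (Suc t)" "k * Suc (Suc (Suc t)) - 1 - i"] M1 e1 e2 by simp
      then show "s_coef k (Suc j) * real ((k * (n - Suc j) - 1 - i) choose (n - Suc j - 1))
          - s_coef k (Suc j) * real ((k * (n - Suc j) - 1 - Suc i) choose (n - Suc j - 1))
          = s_coef k (Suc j) * real ((k * (n - 1 - Suc j) - 1 - (Suc i - k)) choose (n - 1 - Suc j - 1))"
        unfolding t by (simp add: right_diff_distrib[symmetric])
    qed
    also have "\<dots> = (\<Sum>l = 1..n - 1 - 2. s_coef k l * real ((k * (n - 1 - l) - 1 - (Suc i - k)) choose (n - 1 - l - 1)))"
      unfolding nm(2) sum_1_lt ..
    finally show ?thesis .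
  qed
  show ?thesis using da db dc first second by simp
qed




definition dd :: "nat \<Rightarrow> nat \<Rightarrow> nat \<Rightarrow> real" where
  "dd k n j = (if n = 1 then (if j = k - 1 then 1 else 0)
     else if k \<le> j \<and> j \<le> (k - 1) * n then d_coef k n j else 0)"

lemma d_two: assumes k2: "k \<ge> 2" and "k \<le> j" "j \<le> (k - 1) * 2"
  shows "d_coef k 2 j = 1"
  using d_alt[OF k2 order.refl assms(2,3)] by simp

lemma mult_pred_split: "(m::nat) \<ge> 1 \<Longrightarrow> a * m = a * (m - 1) + a"
  by (cases m) auto

lemma dd_rec: assumes k2: "k \<ge> 2" and n2: "n \<ge> 2"
  shows "dd k n i - dd k n (Suc i) =
     (if Suc i < k then 0 else dd k (n - 1) (Suc i - k) - (if Suc i = k then s_coef k (n - 1) else 0))"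
proof -
  have split: "(k - 1) * n = (k - 1) * (n - 1) + (k - 1)" using n2 mult_pred_split[of n "k - 1"] by simp
  have kn: "k \<le> (k - 1) * n"
  proof -
    have "1 \<le> n - 1" using n2 by simp
    then have "(k - 1) * 1 \<le> (k - 1) * (n - 1)" by (rule mult_le_mono2)
    then have "k - 1 \<le> (k - 1) * (n - 1)" by simp
    then show ?thesis using split k2 by linarith
  qed
  consider (a) "Suc i < k" | (b) "Suc i = k" | (c) "k \<le> i" by linarith
  then show ?thesis
  proof cases
    case a
    then show ?thesis using n2 by (simp add: dd_def)
  next
    case b
    have "dd k n (Suc i) = s_coef k (n - 1)" using b d_k[OF k2 n2] kn n2 by (simp add: dd_def)
    moreover have "dd k n i = 0" using b n2 by (simp add: dd_def)
    moreover have "dd k (n - 1) 0 = 0" using k2 by (simp add: dd_def)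
    ultimately show ?thesis using b by simp
  next
    case c
    then have rhs: "(if Suc i < k then 0 else dd k (n - 1) (Suc i - k) - (if Suc i = k then s_coef k (n - 1) else 0))
        = dd k (n - 1) (Suc i - k)" by simp
    consider (c1) "(k - 1) * n < i" | (c2) "i = (k - 1) * n" | (c3) "i < (k - 1) * n" by linarith
    then show ?thesis
    proof cases
      case c1
      have "dd k (n - 1) (Suc i - k) = 0"
      proof (cases "n = 2")
        case True
        then show ?thesis using c1 by (simp add: dd_def)
      next
        case False
        have "\<not> (Suc i - k \<le> (k - 1) * (n - 1))" using c1 split by linarith
        then show ?thesis using False n2 by (simp add: dd_def)
      qed
      then show ?thesis using rhs c1 n2 by (simp add: dd_def)
    next
      case c2
      have "dd k n i = 1" using c2 c kn n2 d_top[OF k2 n2] by (simp add: dd_def)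
      moreover have "dd k n (Suc i) = 0" using c2 n2 by (simp add: dd_def)
      moreover have "dd k (n - 1) (Suc i - k) = 1"
      proof (cases "n = 2")
        case True
        then have "Suc i - k = k - 1" using c2 k2 by simp
        then show ?thesis using True by (simp add: dd_def)
      next
        case False
        then have n3: "n - 1 \<ge> 2" using n2 by simp
        have e: "Suc i - k = (k - 1) * (n - 1)" using c2 split k2 by simp
        have "k \<le> (k - 1) * (n - 1)"
        proof -
          have "n - 1 - 1 = n - 2" by simp
          then have "(k - 1) * (n - 1) = (k - 1) * (n - 2) + (k - 1)" using n3 mult_pred_split[of "n - 1" "k - 1"]
            by (simp only:)
          moreover have "k - 1 \<le> (k - 1) * (n - 2)"
          proof -
            have "1 \<le> n - 2" using n3 by simp
            then have "(k - 1) * 1 \<le> (k - 1) * (n - 2)" by (rule mult_le_mono2)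
            then show ?thesis by simp
          qed
          ultimately show ?thesis using k2 by linarith
        qed
        then show ?thesis using e d_top[OF k2 n3] False n2 by (simp add: dd_def)
      qed
      ultimately show ?thesis using rhs by simp
    next
      case c3
      have l1: "dd k n i = d_coef k n i" using c c3 n2 by (simp add: dd_def)
      have l2: "dd k n (Suc i) = d_coef k n (Suc i)" using c c3 n2 by (simp add: dd_def)
      show ?thesis
      proof (cases "n = 2")
        case True
        have "d_coef k n i = 1" "d_coef k n (Suc i) = 1" using d_two[OF k2] c c3 True by auto
        moreover have "dd k (n - 1) (Suc i - k) = 0" using True c3 by (simp add: dd_def)
        ultimately show ?thesis using l1 l2 rhs by simp
      next
        case False
        then have n3: "n \<ge> 3" using n2 by simp
        show ?thesis
        proof (cases "i \<le> 2 * k - 2")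
          case True
          have "d_coef k n i = d_coef k n (Suc i)" by (rule d_mid[OF k2 n3 c True])
          moreover have "dd k (n - 1) (Suc i - k) = 0"
          proof -
            have "\<not> k \<le> Suc i - k" using True k2 by linarith
            then show ?thesis using n3 by (simp add: dd_def)
          qed
          ultimately show ?thesis using l1 l2 rhs by simp
        next
          case False
          then have ik: "2 * k - 1 \<le> i" by simp
          have si: "Suc i \<le> (k - 1) * n" using c3 by simp
          have "d_coef k n i - d_coef k n (Suc i) = d_coef k (n - 1) (Suc i - k)"
            by (rule d_step[OF k2 n3 ik si])
          moreover have "dd k (n - 1) (Suc i - k) = d_coef k (n - 1) (Suc i - k)"
          proof -
            have "k \<le> Suc i - k" "Suc i - k \<le> (k - 1) * (n - 1)" using ik c3 split k2 by linarith+
            then show ?thesis using n3 by (simp add: dd_def)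
          qed
          ultimately show ?thesis using l1 l2 rhs by simp
        qed
      qed
    qed
  qed
qed




definition Dp :: "nat \<Rightarrow> nat \<Rightarrow> real poly" where
  "Dp k n = (\<Sum>j\<le>(k - 1) * n. monom (dd k n j) j)"

lemma dd_zero_big: assumes "n \<ge> 1" "j > (k - 1) * n" shows "dd k n j = 0"
  using assms by (auto simp: dd_def)

lemma coeff_Dp: assumes "n \<ge> 1" shows "coeff (Dp k n) j = dd k n j"
proof -
  have "coeff (Dp k n) j = (\<Sum>i\<le>(k - 1) * n. if i = j then dd k n i else 0)"
    unfolding Dp_def coeff_sum coeff_monom by (intro sum.cong) auto
  also have "\<dots> = (if j \<le> (k - 1) * n then dd k n j else 0)"
    by (simp add: sum.delta)
  also have "\<dots> = dd k n j" using dd_zero_big[OF assms] by auto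
  finally show ?thesis .
qed

lemma lin_mult: "[:-1, 1:] * (P :: real poly) = pCons 0 P - P"
  by (simp add: algebra_simps)

lemma coeff_minus_const: "coeff (P - [:c:]) m = coeff P m - (if m = 0 then c else 0)"
  by (cases m) auto

lemma Dp_rec: assumes k2: "k \<ge> 2" and n2: "n \<ge> 2"
  shows "[:-1, 1:] * Dp k n = monom 1 k * (Dp k (n - 1) - [:s_coef k (n - 1):])"
proof (rule poly_eqI)
  fix j
  have n1: "n \<ge> 1" "n - 1 \<ge> 1" using n2 by auto
  show "coeff ([:-1, 1:] * Dp k n) j = coeff (monom 1 k * (Dp k (n - 1) - [:s_coef k (n - 1):])) j"
  proof (cases j)
    case 0
    then show ?thesis unfolding lin_mult using k2 n2 by (simp add: coeff_Dp[OF n1(1)] dd_def coeff_monom_mult)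
  next
    case (Suc i)
    have "coeff ([:-1, 1:] * Dp k n) j = dd k n i - dd k n (Suc i)"
      unfolding lin_mult Suc by (simp add: coeff_Dp[OF n1(1)])
    also have "\<dots> = (if Suc i < k then 0 else dd k (n - 1) (Suc i - k) - (if Suc i = k then s_coef k (n - 1) else 0))"
      by (rule dd_rec[OF k2 n2])
    also have "\<dots> = coeff (monom 1 k * (Dp k (n - 1) - [:s_coef k (n - 1):])) j"
    proof -
      have cD: "\<And>m. coeff (Dp k (n - 1)) m = dd k (n - 1) m" using coeff_Dp[OF n1(2)] by simp
      show ?thesis unfolding coeff_monom_mult Suc coeff_minus_const cD by auto
    qed
    finally show ?thesis .
  qed
qed

lemma pderiv_sum': "pderiv (sum f A) = (\<Sum>x\<in>A. pderiv (f x))"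
  using higher_pderiv_sum[of 1 f A] by simp

lemma poly_Dp: "poly (Dp k n) x = (\<Sum>j\<le>(k - 1) * n. dd k n j * x ^ j)"
  unfolding Dp_def poly_sum poly_monom ..

lemma xpoly_pderiv_Dp: "x * poly (pderiv (Dp k n)) x = (\<Sum>j\<le>(k - 1) * n. real j * dd k n j * x ^ j)"
proof -
  have "x * poly (pderiv (Dp k n)) x = (\<Sum>j\<le>(k - 1) * n. x * (real j * dd k n j * x ^ (j - 1)))"
    unfolding Dp_def pderiv_sum' poly_sum pderiv_monom poly_monom sum_distrib_left by simp
  also have "\<dots> = (\<Sum>j\<le>(k - 1) * n. real j * dd k n j * x ^ j)"
  proof (intro sum.cong refl)
    fix j :: nat
    show "x * (real j * dd k n j * x ^ (j - 1)) = real j * dd k n j * x ^ j"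
      by (cases j) (simp_all add: algebra_simps)
  qed
  finally show ?thesis .
qed

lemma eval_rec: assumes k2: "k \<ge> 2" and n2: "n \<ge> 2"
  shows "(x - 1) * poly (Dp k n) x = x ^ k * (poly (Dp k (n - 1)) x - s_coef k (n - 1))"
    and "(x - 1) * poly (pderiv (Dp k n)) x + poly (Dp k n) x
       = x ^ k * poly (pderiv (Dp k (n - 1))) x + real k * x ^ (k - 1) * (poly (Dp k (n - 1)) x - s_coef k (n - 1))"
proof -
  have e: "[:-1, 1:] * Dp k n = monom 1 k * (Dp k (n - 1) - [:s_coef k (n - 1):])" by (rule Dp_rec[OF k2 n2])
  from arg_cong[OF e, of "\<lambda>P. poly P x"]
  show "(x - 1) * poly (Dp k n) x = x ^ k * (poly (Dp k (n - 1)) x - s_coef k (n - 1))"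
    by (simp add: poly_monom algebra_simps)
  from arg_cong[OF e, of "\<lambda>P. poly (pderiv P) x"]
  show "(x - 1) * poly (pderiv (Dp k n)) x + poly (Dp k n) x
       = x ^ k * poly (pderiv (Dp k (n - 1))) x + real k * x ^ (k - 1) * (poly (Dp k (n - 1)) x - s_coef k (n - 1))"
    by (simp add: pderiv_mult pderiv_monom poly_monom pderiv_pCons pderiv_diff pderiv_smult algebra_simps)
qed




definition Mv :: "nat \<Rightarrow> real \<Rightarrow> nat \<Rightarrow> real" where
  "Mv k p n = (p ^ (k - 1) * (1 - p)) ^ n * poly (Dp k n) (1 / p)"

definition Lv :: "nat \<Rightarrow> real \<Rightarrow> nat \<Rightarrow> real" where
  "Lv k p n = (p ^ (k - 1) * (1 - p)) ^ n * ((1 / p) * poly (pderiv (Dp k n)) (1 / p))"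

lemma pow_split: "k \<ge> 1 \<Longrightarrow> (p::real) ^ k = p * p ^ (k - 1)"
  by (cases k) auto

lemma rec_ML: assumes k2: "k \<ge> 2" and n2: "n \<ge> 2" and p0: "0 < p" and p1: "p < 1"
  shows "Mv k p n = Mv k p (n - 1) - (p ^ (k - 1) * (1 - p)) ^ (n - 1) * s_coef k (n - 1)"
    and "(1 - p) * Lv k p n = (1 - p) * Lv k p (n - 1) + (real k * (1 - p) - 1) * Mv k p n"
proof -
  define P where "P = p ^ (k - 1)"
  define q where "q = 1 - p"
  define A where "A = (P * q) ^ (n - 1)"
  define u where "u = poly (Dp k n) (1 / p)"
  define u' where "u' = poly (pderiv (Dp k n)) (1 / p)"
  define v where "v = poly (Dp k (n - 1)) (1 / p)"
  define v' where "v' = poly (pderiv (Dp k (n - 1))) (1 / p)"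
  define s where "s = s_coef k (n - 1)"
  have P0: "P > 0" unfolding P_def using p0 by simp
  have q0: "q > 0" unfolding q_def using p1 by simp
  have an: "(P * q) ^ n = A * (P * q)" unfolding A_def using n2 pow_split[of n "P * q"] by simp
  have xk: "(1 / p) ^ k = 1 / (p * P)" unfolding P_def using pow_split[of k p] k2 by (simp add: power_one_over)
  have xk1: "(1 / p) ^ (k - 1) = 1 / P" unfolding P_def by (simp add: power_one_over)
  have E1: "(1 / p - 1) * u = (1 / p) ^ k * (v - s)"
    unfolding u_def v_def s_def by (rule eval_rec(1)[OF k2 n2])
  have E2: "(1 / p - 1) * u' + u = (1 / p) ^ k * v' + real k * (1 / p) ^ (k - 1) * (v - s)"
    unfolding u_def v_def s_def u'_def v'_def by (rule eval_rec(2)[OF k2 n2])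
  have h1: "v - s = P * q * u"
  proof -
    have "(1 / p - 1) * u = (v - s) / (p * P)" using E1 xk by simp
    then have "v - s = (1 / p - 1) * u * (p * P)" using p0 P0 by (simp add: field_simps)
    also have "\<dots> = P * q * u" unfolding q_def using p0 by (simp add: field_simps)
    finally show ?thesis .
  qed
  show "Mv k p n = Mv k p (n - 1) - (p ^ (k - 1) * (1 - p)) ^ (n - 1) * s_coef k (n - 1)"
    unfolding Mv_def P_def[symmetric] q_def[symmetric] A_def[symmetric] u_def[symmetric] v_def[symmetric] s_def[symmetric] an
    using h1 by (simp add: algebra_simps)
  have h2: "q * P * u' = v' + (real k * q - 1) * p * P * u"
  proof -
    have "(1 / p - 1) * u' + u = v' / (p * P) + real k * (v - s) / P" using E2 xk xk1 by simp
    then have "((1 / p - 1) * u' + u) * (p * P) = v' + real k * (v - s) * p" using p0 P0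
      by (simp add: field_simps)
    moreover have "((1 / p - 1) * u' + u) * (p * P) = q * P * u' + p * P * u" unfolding q_def using p0
      by (simp add: field_simps)
    ultimately have "q * P * u' + p * P * u = v' + real k * (P * q * u) * p" unfolding h1 by simp
    then show ?thesis by (simp add: algebra_simps)
  qed
  have a1: "Lv k p n = A * (P * q) * (1 / p) * u'" unfolding Lv_def P_def[symmetric] q_def[symmetric] an u'_def by simp
  have a2: "Lv k p (n - 1) = A * (1 / p) * v'" unfolding Lv_def P_def[symmetric] q_def[symmetric] A_def v'_def by simp
  have a3: "Mv k p n = A * (P * q) * u" unfolding Mv_def P_def[symmetric] q_def[symmetric] an u_def by simp
  have "q * (A * (P * q) * (1 / p) * u') = A * q * (1 / p) * (q * P * u')" by (simp add: algebra_simps)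
  also have "\<dots> = A * q * (1 / p) * (v' + (real k * q - 1) * p * P * u)" using h2 by simp
  also have "\<dots> = q * (A * (1 / p) * v') + (real k * q - 1) * (A * (P * q) * u)" using p0 by (simp add: field_simps)
  finally have "q * (A * (P * q) * (1 / p) * u') = q * (A * (1 / p) * v') + (real k * q - 1) * (A * (P * q) * u)" .
  then show "(1 - p) * Lv k p n = (1 - p) * Lv k p (n - 1) + (real k * (1 - p) - 1) * Mv k p n"
    using a1 a2 a3 by (simp add: q_def)
qed

lemma mult_if_delta: "(if j = c then 1 else 0) * (y::real) = (if j = c then y else 0)"
  by simp

lemma base_ML: assumes k2: "k \<ge> 2" and p0: "0 < p"
  shows "Mv k p 1 = 1 - p" and "Lv k p 1 = (real k - 1) * (1 - p)"
proof -
  have dd1: "\<And>j. dd k 1 j = (if j = k - 1 then 1 else 0)" by (simp add: dd_def)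
  have "poly (Dp k 1) (1 / p) = (1 / p) ^ (k - 1)"
    unfolding poly_Dp dd1 mult_if_delta by (simp add: sum.delta)
  then show "Mv k p 1 = 1 - p" unfolding Mv_def using p0 by (simp add: power_one_over)
  have "(1 / p) * poly (pderiv (Dp k 1)) (1 / p) = real (k - 1) * (1 / p) ^ (k - 1)"
  proof -
    have "\<And>j. real j * (if j = k - 1 then 1 else 0) * (1 / p) ^ j = (if j = k - 1 then real (k - 1) * (1 / p) ^ (k - 1) else 0)"
      by simp
    then show ?thesis unfolding xpoly_pderiv_Dp dd1 by (simp only: sum.delta) simp
  qed
  then show "Lv k p 1 = (real k - 1) * (1 - p)" unfolding Lv_def using p0 k2
    by (simp add: power_one_over of_nat_diff)
qed

lemma L_coef_Lv: assumes k2: "k \<ge> 2" and n2: "n \<ge> 2"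
  shows "L_coef k n p = Lv k p n / (1 - p)"
proof -
  have "(1 / p) * poly (pderiv (Dp k n)) (1 / p) = (\<Sum>j\<le>(k - 1) * n. real j * dd k n j * (1 / p) ^ j)"
    by (rule xpoly_pderiv_Dp)
  also have "\<dots> = (\<Sum>j = k..(k - 1) * n. real j * d_coef k n j * (1 / p) ^ j)"
  proof (rule sum.mono_neutral_cong_right)
    show "finite {..(k - 1) * n}" by simp
    show "{k..(k - 1) * n} \<subseteq> {..(k - 1) * n}" by auto
    show "\<forall>i\<in>{..(k - 1) * n} - {k..(k - 1) * n}. real i * dd k n i * (1 / p) ^ i = 0"
      using n2 by (auto simp: dd_def)
    show "\<And>x. x \<in> {k..(k - 1) * n} \<Longrightarrow> real x * dd k n x * (1 / p) ^ x = real x * d_coef k n x * (1 / p) ^ x"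
      using n2 by (auto simp: dd_def)
  qed
  finally show ?thesis unfolding L_coef_def Lv_def Let_def by simp
qed




lemma times_one_minus_X_nth: "(f * (1 - fps_X) :: real fps) $ n = f $ n - (if n = 0 then 0 else f $ (n - 1))"
proof -
  have "f * (1 - fps_X) = f - f * fps_X" by (simp add: right_diff_distrib)
  then show ?thesis by simp
qed

lemma N_nth:
  fixes k :: nat and p :: real
  shows "(fps_X * fps_const (real k * p - (real k - 1))
        * (S_fps k oo (fps_const (p ^ (k - 1) * (1 - p)) * fps_X))
      - fps_const (1 - p) * fps_X ^ 2
        * (fps_const ((2 * real k - 1) * p - (2 * real k - 2))
           + fps_const ((real k - 1) * (1 - p)) * fps_X)) $ n
   = (if n \<ge> 2 then (real k * p - (real k - 1)) * (p ^ (k - 1) * (1 - p)) ^ (n - 1) * s_coef k (n - 1) else 0)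
     - (if n = 2 then (1 - p) * ((2 * real k - 1) * p - (2 * real k - 2)) else 0)
     - (if n = 3 then (1 - p) * ((real k - 1) * (1 - p)) else 0)"
proof -
  have t1: "(fps_X * fps_const (real k * p - (real k - 1))
        * (S_fps k oo (fps_const (p ^ (k - 1) * (1 - p)) * fps_X))) $ n
     = (if n \<ge> 2 then (real k * p - (real k - 1)) * (p ^ (k - 1) * (1 - p)) ^ (n - 1) * s_coef k (n - 1) else 0)"
    unfolding fps_compose_linear mult.assoc fps_X_mult_nth by (cases n) (auto simp: S_fps_def)
  have t2: "(fps_const (1 - p) * fps_X ^ 2
        * (fps_const ((2 * real k - 1) * p - (2 * real k - 2))
           + fps_const ((real k - 1) * (1 - p)) * fps_X)) $ n
     = (if n = 2 then (1 - p) * ((2 * real k - 1) * p - (2 * real k - 2)) else 0)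
     + (if n = 3 then (1 - p) * ((real k - 1) * (1 - p)) else 0)"
    unfolding mult.assoc fps_mult_left_const_nth fps_X_power_mult_nth
    by (simp add: fps_X_nth)
  show ?thesis unfolding fps_sub_nth t1 t2 by simp
qed

theorem lemma3p2:
  fixes k :: nat and p :: real
  assumes "k \<ge> 2" and "0 < p" and "p < 1"
  shows "L_fps k p =
    (fps_X * fps_const (real k * p - (real k - 1))
        * (S_fps k oo (fps_const (p ^ (k - 1) * (1 - p)) * fps_X))
      - fps_const (1 - p) * fps_X ^ 2
        * (fps_const ((2 * real k - 1) * p - (2 * real k - 2))
           + fps_const ((real k - 1) * (1 - p)) * fps_X))
    / (fps_const ((1 - p) ^ 2) * (1 - fps_X) ^ 2)"
proof -
  note k2 = assms(1) and p0 = assms(2) and p1 = assms(3)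
  define q where "q = 1 - p"
  define a where "a = p ^ (k - 1) * (1 - p)"
  have q0: "q > 0" unfolding q_def using p1 by simp
  define N where "N = (fps_X * fps_const (real k * p - (real k - 1))
        * (S_fps k oo (fps_const (p ^ (k - 1) * (1 - p)) * fps_X))
      - fps_const (1 - p) * fps_X ^ 2
        * (fps_const ((2 * real k - 1) * p - (2 * real k - 2))
           + fps_const ((real k - 1) * (1 - p)) * fps_X))"
  define Den :: "real fps" where "Den = fps_const ((1 - p) ^ 2) * (1 - fps_X) ^ 2"
  have Den0: "Den \<noteq> 0"
  proof
    assume "Den = 0"
    then have "Den $ 0 = 0" by simp
    then show False unfolding Den_def using p1 by simp
  qed
  define l where "l = (\<lambda>n. L_fps k p $ n)"
  have l_eq: "\<And>n. n \<ge> 2 \<Longrightarrow> q * q * l n = q * Lv k p n"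
    unfolding l_def L_fps_def q_def using L_coef_Lv[OF k2] q0 q_def by simp
  have l01: "l 0 = 0" "l 1 = 0" unfolding l_def L_fps_def by simp_all
  define M where "M = Mv k p"
  define Lw where "Lw = Lv k p"
  have RM: "\<And>n. n \<ge> 2 \<Longrightarrow> M n = M (n - 1) - a ^ (n - 1) * s_coef k (n - 1)"
    unfolding M_def a_def using rec_ML(1)[OF k2 _ p0 p1] by blast
  have RL: "\<And>n. n \<ge> 2 \<Longrightarrow> q * Lw n = q * Lw (n - 1) + (real k * q - 1) * M n"
    unfolding M_def Lw_def q_def using rec_ML(2)[OF k2 _ p0 p1] by blast
  have B: "M 1 = q" "Lw 1 = (real k - 1) * q" unfolding M_def Lw_def q_def using base_ML[OF k2 p0] by simp_all
  have le: "\<And>n. n \<ge> 2 \<Longrightarrow> q * q * l n = q * Lw n" unfolding Lw_def using l_eq by simp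
  have coef: "\<And>n. q * q * ((l n - (if n = 0 then 0 else l (n - 1)))
        - (if n = 0 then 0 else (l (n - 1) - (if n - 1 = 0 then 0 else l (n - 1 - 1)))))
      = N $ n"
  proof -
    fix n
    show "q * q * ((l n - (if n = 0 then 0 else l (n - 1)))
        - (if n = 0 then 0 else (l (n - 1) - (if n - 1 = 0 then 0 else l (n - 1 - 1))))) = N $ n"
    proof (cases "n \<ge> 4")
      case True
      then obtain m where m: "n = m + 4" by (metis add.commute le_Suc_ex)
      have n1: "n - 1 = m + 3" "n - 1 - 1 = m + 2" using m by simp_all
      have l4: "q * q * l (m + 4) = q * Lw (m + 4)" by (rule le) simp
      have l3: "q * q * l (m + 3) = q * Lw (m + 3)" by (rule le) simp
      have l2: "q * q * l (m + 2) = q * Lw (m + 2)" by (rule le) simp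
      have r4: "q * Lw (m + 4) = q * Lw (m + 3) + (real k * q - 1) * M (m + 4)"
      proof -
        have e: "m + 4 - 1 = m + 3" by simp
        show ?thesis by (rule RL[of "m + 4", unfolded e]) simp
      qed
      have r3: "q * Lw (m + 3) = q * Lw (m + 2) + (real k * q - 1) * M (m + 3)"
      proof -
        have e: "m + 3 - 1 = m + 2" by simp
        show ?thesis by (rule RL[of "m + 3", unfolded e]) simp
      qed
      have m4: "M (m + 4) = M (m + 3) - a ^ (m + 3) * s_coef k (m + 3)"
      proof -
        have e: "m + 4 - 1 = m + 3" by simp
        show ?thesis by (rule RM[of "m + 4", unfolded e]) simp
      qed
      have "q * q * ((l n - (if n = 0 then 0 else l (n - 1)))
        - (if n = 0 then 0 else (l (n - 1) - (if n - 1 = 0 then 0 else l (n - 1 - 1)))))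
          = q * q * l (m + 4) - 2 * (q * q * l (m + 3)) + q * q * l (m + 2)"
        unfolding n1 by (simp add: m algebra_simps)
      also have "\<dots> = q * Lw (m + 4) - 2 * (q * Lw (m + 3)) + q * Lw (m + 2)"
        by (simp only: l4 l3 l2)
      also have "\<dots> = (real k * q - 1) * (M (m + 4) - M (m + 3))"
        unfolding r4 r3 by (simp add: algebra_simps)
      also have "\<dots> = - (real k * q - 1) * a ^ (m + 3) * s_coef k (m + 3)"
        unfolding m4 by (simp add: algebra_simps)
      also have "\<dots> = N $ n"
      proof -
        have "N $ n = (real k * p - (real k - 1)) * a ^ (m + 3) * s_coef k (m + 3)"
          unfolding N_def N_nth a_def using m by (simp add: add.commute)
        then show ?thesis unfolding q_def by (simp add: algebra_simps)
      qed
      finally show ?thesis .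
    next
      case False
      then consider "n = 0" | "n = 1" | "n = 2" | "n = 3" by linarith
      then show ?thesis
      proof cases
        case 1
        then show ?thesis unfolding N_def N_nth using l01 by simp
      next
        case 2
        then show ?thesis unfolding N_def N_nth using l01 by simp
      next
        case 3
        have l2: "q * q * l 2 = q * Lw 2" by (rule le) simp
        have e1: "(2::nat) - 1 = 1" by simp
        have r2: "q * Lw 2 = q * Lw 1 + (real k * q - 1) * M 2" by (rule RL[of 2, unfolded e1]) simp
        have m2: "M 2 = M 1 - a ^ 1 * s_coef k 1" by (rule RM[of 2, unfolded e1]) simp
        have N2: "N $ 2 = (real k * p - (real k - 1)) * a * s_coef k 1 - (1 - p) * ((2 * real k - 1) * p - (2 * real k - 2))"
          unfolding N_def N_nth a_def by simp
        have "q * q * ((l n - (if n = 0 then 0 else l (n - 1)))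
          - (if n = 0 then 0 else (l (n - 1) - (if n - 1 = 0 then 0 else l (n - 1 - 1))))) = q * q * l 2"
          using 3 l01 by simp
        also have "\<dots> = (real k - 1) * q * q + (real k * q - 1) * (q - a * s_coef k 1)"
          unfolding l2 r2 m2 B by (simp add: algebra_simps)
        also have "\<dots> = N $ 2" unfolding N2 q_def by (simp add: algebra_simps)
        finally show ?thesis using 3 by simp
      next
        case 4
        have l2: "q * q * l 2 = q * Lw 2" by (rule le) simp
        have l3: "q * q * l 3 = q * Lw 3" by (rule le) simp
        have e1: "(2::nat) - 1 = 1" "(3::nat) - 1 = 2" by simp_all
        have r2: "q * Lw 2 = q * Lw 1 + (real k * q - 1) * M 2" by (rule RL[of 2, unfolded e1]) simp
        have r3: "q * Lw 3 = q * Lw 2 + (real k * q - 1) * M 3" by (rule RL[of 3, unfolded e1]) simp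
        have m3: "M 3 = M 2 - a ^ 2 * s_coef k 2" by (rule RM[of 3, unfolded e1]) simp
        have N3: "N $ 3 = (real k * p - (real k - 1)) * a ^ 2 * s_coef k 2 - (1 - p) * ((real k - 1) * (1 - p))"
          unfolding N_def N_nth a_def by (simp add: numeral_eq_Suc)
        have "q * q * ((l n - (if n = 0 then 0 else l (n - 1)))
          - (if n = 0 then 0 else (l (n - 1) - (if n - 1 = 0 then 0 else l (n - 1 - 1))))) = q * q * l 3 - 2 * (q * q * l 2)"
          using 4 l01 by (simp add: numeral_eq_Suc algebra_simps)
        also have "\<dots> = q * Lw 3 - 2 * (q * Lw 2)" by (simp only: l2 l3)
        also have "\<dots> = (real k * q - 1) * (M 3 - M 2) - q * Lw 1"
          unfolding r3 r2 by (simp add: algebra_simps)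
        also have "\<dots> = - (real k * q - 1) * a ^ 2 * s_coef k 2 - (real k - 1) * q * q"
          unfolding m3 B by (simp add: algebra_simps)
        also have "\<dots> = N $ 3" unfolding N3 q_def by (simp add: algebra_simps)
        finally show ?thesis using 4 by simp
      qed
    qed
  qed
  have key: "L_fps k p * Den = N"
  proof (rule fps_ext)
    fix n
    have e: "L_fps k p * Den = fps_const (q * q) * ((L_fps k p * (1 - fps_X)) * (1 - fps_X))"
      unfolding Den_def q_def by (simp add: power2_eq_square mult.assoc mult.left_commute)
    have "(L_fps k p * Den) $ n = q * q * ((L_fps k p * (1 - fps_X)) * (1 - fps_X)) $ n"
      unfolding e fps_mult_left_const_nth ..
    also have "\<dots> = q * q * ((l n - (if n = 0 then 0 else l (n - 1)))
        - (if n = 0 then 0 else (l (n - 1) - (if n - 1 = 0 then 0 else l (n - 1 - 1)))))"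
      unfolding l_def times_one_minus_X_nth ..
    finally have "(L_fps k p * Den) $ n = q * q * ((l n - (if n = 0 then 0 else l (n - 1)))
        - (if n = 0 then 0 else (l (n - 1) - (if n - 1 = 0 then 0 else l (n - 1 - 1)))))" .
    then show "(L_fps k p * Den) $ n = N $ n" using coef by simp
  qed
  have "N / Den = L_fps k p" unfolding key[symmetric] using Den0 by (rule fps_divide_times_eq)
  then show ?thesis unfolding N_def Den_def by simp
qed


end
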